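(* Let $\nu$ be a fixed order, let $f\in C^{\infty}[a,b]$ where either $b>a>0$ or $a<b<0$, and let $\mathcal{H}_{\nu}[f]=\int_a^b f(x)J_{\nu}(\omega x)\,dx$ for $\omega>0$. Define $\sigma_0[f](x)=f(x)$ and $\sigma_k[f](x)=x^{\nu+k}\frac{d}{dx}\left[\frac{\sigma_{k-1}[f](x)}{x^{\nu+k}}\right]$ for $k\ge1$. Then, as $\omega\to\infty$, $$\mathcal{H}_{\nu}[f]\sim-\sum_{k=1}^{\infty}\frac{1}{(-\omega)^k}\Big\{\sigma_{k-1}[f](b)J_{\nu+k}(\omega b)-\sigma_{k-1}[f](a)J_{\nu+k}(\omega a)\Big\}.$$
   Context: $J_\nu$ is the Bessel function of the first kind of order $\nu$; $\sim$ denotes an asymptotic expansion as $\omega\to\infty$. *)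

theory Defs
  imports "HOL-Analysis.Analysis" "HOL-Library.Landau_Symbols"
begin

text \<open>The reciprocal Gamma function rGamma makes the formula valid for all real orders.\<close>
definition bessel_J :: "real \<Rightarrow> complex \<Rightarrow> complex" where
  "bessel_J \<nu> z = (z / 2) powr (complex_of_real \<nu>) *
     (\<Sum>m. (- ((z / 2) ^ 2)) ^ m / of_nat (fact m) * rGamma (of_nat m + complex_of_real \<nu> + 1))"

definition smooth_on_interval :: "(real \<Rightarrow> real) \<Rightarrow> real \<Rightarrow> real \<Rightarrow> bool" where
  "smooth_on_interval f a b \<longleftrightarrow>
     (\<exists>D. D 0 = f \<and>
        (\<forall>n. \<forall>x\<in>{a..b}. (D n has_real_derivative D (Suc n) x) (at x within {a..b})))"

fun sigma :: "real \<Rightarrow> (real \<Rightarrow> real) \<Rightarrow> real \<Rightarrow> real \<Rightarrow> nat \<Rightarrow> real \<Rightarrow> complex" where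
  "sigma \<nu> f a b 0 = (\<lambda>x. complex_of_real (f x))"
| "sigma \<nu> f a b (Suc k) = (\<lambda>x.
     (complex_of_real x) powr (complex_of_real (\<nu> + real (Suc k))) *
     vector_derivative
       (\<lambda>y. sigma \<nu> f a b k y / (complex_of_real y) powr (complex_of_real (\<nu> + real (Suc k))))
       (at x within {a..b}))"

definition hankel_type_integral :: "real \<Rightarrow> (real \<Rightarrow> real) \<Rightarrow> real \<Rightarrow> real \<Rightarrow> real \<Rightarrow> complex" where
  "hankel_type_integral \<nu> f a b \<omega> =
     integral {a..b} (\<lambda>x. complex_of_real (f x) * bessel_J \<nu> (complex_of_real (\<omega> * x)))"

end

theory Submission
  imports Defs
begin


definition bc :: "real \<Rightarrow> nat \<Rightarrow> real" where
  "bc \<mu> n = (-1)^n / fact n * rGamma (real n + \<mu> + 1)"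

definition BP :: "real \<Rightarrow> real \<Rightarrow> real" where
  "BP \<mu> y = (\<Sum>n. bc \<mu> n * y^n)"

lemma bc_Suc: "bc \<mu> (Suc n) * (real (Suc n) * (real n + \<mu> + 1)) = - bc \<mu> n"
proof -
  have "rGamma (real n + \<mu> + 1) = (real n + \<mu> + 1) * rGamma (real n + \<mu> + 1 + 1)"
    by (metis rGamma_plus1)
  have f: "real (Suc n) / fact (Suc n) = 1 / fact n"
    by (simp add: fact_Suc del: of_nat_Suc)
  have bS: "bc \<mu> (Suc n) = (-1)^Suc n / fact (Suc n) * rGamma (real n + \<mu> + 1 + 1)"
    by (simp add: bc_def add_ac)
  have "bc \<mu> (Suc n) * (real (Suc n) * (real n + \<mu> + 1))
     = (real (Suc n) / fact (Suc n)) * ((-1)^Suc n * ((real n + \<mu> + 1) * rGamma (real n + \<mu> + 1 + 1)))"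
    unfolding bS by (simp only: mult_ac times_divide_eq_left times_divide_eq_right)
  also have "\<dots> = - bc \<mu> n" unfolding f \<open>rGamma (real n + \<mu> + 1) = _\<close>[symmetric]
    by (simp add: bc_def)
  finally show ?thesis .
qed

lemma bc_summable: "summable (\<lambda>n. bc \<mu> n * y^n)"
proof (rule summable_ratio_test[where c="1/2" and N="nat (ceiling (2*\<bar>y\<bar> + \<bar>\<mu>\<bar> + 2))"])
  fix n assume n: "nat (ceiling (2*\<bar>y\<bar> + \<bar>\<mu>\<bar> + 2)) \<le> n"
  then have n1: "real n \<ge> 2*\<bar>y\<bar> + \<bar>\<mu>\<bar> + 2" by linarith
  define q where "q = real (Suc n) * (real n + \<mu> + 1)"
  have q1: "q \<ge> 2*\<bar>y\<bar> + 1"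
  proof -
    have "real n + \<mu> + 1 \<ge> 1" using n1 by linarith
    moreover have "real (Suc n) \<ge> 2*\<bar>y\<bar> + 1" using n1 by simp
    ultimately have "real (Suc n) * (real n + \<mu> + 1) \<ge> (2*\<bar>y\<bar> + 1) * 1"
      by (intro mult_mono) auto
    then show ?thesis by (simp add: q_def)
  qed
  have e: "bc \<mu> (Suc n) = - bc \<mu> n / q"
    using bc_Suc[of \<mu> n] q1 by (simp add: q_def field_simps)
  have "norm (bc \<mu> (Suc n) * y ^ Suc n) = \<bar>bc \<mu> n\<bar> * \<bar>y\<bar>^n * (\<bar>y\<bar> / q)"
    using q1 by (simp add: e abs_mult power_abs abs_divide)
  also have "\<dots> \<le> \<bar>bc \<mu> n\<bar> * \<bar>y\<bar>^n * (1/2)"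
    using q1 by (intro mult_left_mono) (auto simp: field_simps)
  also have "\<dots> = 1/2 * norm (bc \<mu> n * y ^ n)" by (simp add: abs_mult power_abs)
  finally show "norm (bc \<mu> (Suc n) * y ^ Suc n) \<le> 1/2 * norm (bc \<mu> n * y ^ n)" .
qed simp

lemma diffs_bc: "diffs (bc \<mu>) = (\<lambda>n. - bc (\<mu>+1) n)"
proof
  fix n
  have f: "real (Suc n) / fact (Suc n) = 1 / fact n"
    by (simp add: fact_Suc del: of_nat_Suc)
  have "diffs (bc \<mu>) n = (real (Suc n) / fact (Suc n)) * ((-1)^Suc n * rGamma (real n + (\<mu>+1) + 1))"
    by (simp add: diffs_def bc_def algebra_simps)
  also have "\<dots> = - bc (\<mu>+1) n" unfolding f by (simp add: bc_def)
  finally show "diffs (bc \<mu>) n = - bc (\<mu>+1) n" .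
qed

lemma BP_deriv: "(BP \<mu> has_real_derivative - BP (\<mu>+1) y) (at y)"
proof -
  have "((\<lambda>x. \<Sum>n. bc \<mu> n * x^n) has_real_derivative (\<Sum>n. diffs (bc \<mu>) n * y^n)) (at y)"
    by (rule termdiffs_strong_converges_everywhere) (rule bc_summable)
  moreover have "(\<Sum>n. diffs (bc \<mu>) n * y^n) = - BP (\<mu>+1) y"
    unfolding diffs_bc BP_def using bc_summable
    by (simp add: suminf_minus[symmetric])
  ultimately show ?thesis unfolding BP_def[abs_def] by simp
qed

lemma BP_rec: "s * BP s y - y * BP (s+1) y = BP (s-1) y"
proof -
  define f where "f n = real n * bc s n" for n
  have sd: "summable (\<lambda>n. diffs (bc s) n * y^n)"
    by (rule termdiff_converges_all) (rule bc_summable)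
  have "summable (\<lambda>n. f (Suc n) * y ^ Suc n)"
    using summable_mult2[OF sd, of y] by (simp add: diffs_def f_def mult_ac)
  then have sf: "summable (\<lambda>n. f n * y^n)" by (subst summable_Suc_iff[symmetric])
  have h: "suminf (\<lambda>n. f (Suc n) * y ^ n) * y = suminf (\<lambda>n. f n * y ^ n) - f 0"
    by (rule powser_split_head(2)[OF sf])
  have "(\<lambda>n. f (Suc n) * y ^ n) = (\<lambda>n. - bc (s+1) n * y^n)"
    using diffs_bc[of s] by (auto simp: f_def diffs_def fun_eq_iff dest: fun_cong)
  then have "suminf (\<lambda>n. f (Suc n) * y ^ n) = - BP (s+1) y"
    by (simp add: BP_def suminf_minus[OF bc_summable])
  then have "y * BP (s+1) y = - suminf (\<lambda>n. f n * y ^ n)"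
    using h by (simp add: mult.commute f_def)
  then have "s * BP s y - y * BP (s+1) y = (\<Sum>n. s * (bc s n * y^n)) + (\<Sum>n. f n * y^n)"
    by (simp add: BP_def suminf_mult[OF bc_summable])
  also have "\<dots> = (\<Sum>n. s * (bc s n * y^n) + f n * y^n)"
    by (rule suminf_add) (use sf summable_mult[OF bc_summable] in auto)
  also have "\<dots> = (\<Sum>n. bc (s-1) n * y^n)"
  proof (rule suminf_cong)
    fix n
    have "(real n + s) * rGamma (real n + s + 1) = rGamma (real n + s)"
      by (rule rGamma_plus1)
    then have "bc (s - 1) n = (real n + s) * bc s n"
      by (simp add: bc_def add_ac)
    moreover have "s * (bc s n * y ^ n) + f n * y ^ n = (real n + s) * bc s n * y ^ n"
      by (simp add: f_def algebra_simps)
    ultimately show "s * (bc s n * y ^ n) + f n * y ^ n = bc (s - 1) n * y ^ n"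
      by simp
  qed
  finally show ?thesis by (simp add: BP_def)
qed



definition jr :: "real \<Rightarrow> real \<Rightarrow> real" where
  "jr \<mu> t = (t/2) powr \<mu> * BP \<mu> (t^2/4)"

lemma jr_deriv:
  assumes t: "t > 0"
  shows "(jr \<mu> has_real_derivative (\<mu>/t * jr \<mu> t - jr (\<mu>+1) t)) (at t)"
proof -
  have d0: "((\<lambda>t. t/2) has_real_derivative 1/2) (at t)"
    by (auto intro!: derivative_eq_intros)
  have d1: "((\<lambda>t. (t/2) powr \<mu>) has_real_derivative \<mu> * (t/2) powr (\<mu> - 1) * (1/2)) (at t)"
    using DERIV_fun_powr[OF d0, of \<mu>] t by simp
  have d3: "((\<lambda>t. t^2/4) has_real_derivative t/2) (at t)"
    by (auto intro!: derivative_eq_intros)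
  have d2: "((\<lambda>t. BP \<mu> (t^2/4)) has_real_derivative (- BP (\<mu>+1) (t^2/4)) * (t/2)) (at t)"
    by (rule DERIV_chain2[OF BP_deriv d3])
  have d: "(jr \<mu> has_real_derivative
      \<mu> * (t/2) powr (\<mu> - 1) * (1/2) * BP \<mu> (t^2/4) + (t/2) powr \<mu> * ((- BP (\<mu>+1) (t^2/4)) * (t/2))) (at t)"
    unfolding jr_def[abs_def] by (rule DERIV_cong[OF DERIV_mult[OF d1 d2]]) (simp add: algebra_simps)
  have p1: "(t/2) powr (\<mu> - 1) = (t/2) powr \<mu> / (t/2)"
    using t by (simp add: powr_diff)
  have p2: "(t/2) powr (\<mu> + 1) = (t/2) powr \<mu> * (t/2)"
    using t by (simp add: powr_add)
  have "\<mu> * (t/2) powr (\<mu> - 1) * (1/2) * BP \<mu> (t^2/4) + (t/2) powr \<mu> * ((- BP (\<mu>+1) (t^2/4)) * (t/2))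
      = \<mu>/t * jr \<mu> t - jr (\<mu>+1) t"
    unfolding jr_def p1 p2 using t by (simp add: field_simps)
  then show ?thesis using d by simp
qed

lemma jr_rec:
  assumes t: "t > 0"
  shows "jr (s-1) t + jr (s+1) t = 2 * s / t * jr s t"
proof -
  have p1: "(t/2) powr (s - 1) = (t/2) powr s / (t/2)"
    using t by (simp add: powr_diff)
  have p2: "(t/2) powr (s + 1) = (t/2) powr s * (t/2)"
    using t by (simp add: powr_add)
  have r: "BP (s-1) (t^2/4) = s * BP s (t^2/4) - t^2/4 * BP (s+1) (t^2/4)"
    using BP_rec[of s "t^2/4"] by simp
  show ?thesis
    unfolding jr_def p1 p2 r using t by (simp add: field_simps power2_eq_square)
qed

lemma jr_bounded: "\<exists>C T. T > 0 \<and> (\<forall>t\<ge>T. \<bar>jr \<mu> t\<bar> \<le> C)"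
proof -
  define c where "c = \<bar>2*\<mu>+1\<bar>"
  define T where "T = max 1 c"
  define A where "A = jr \<mu>"
  define B where "B = jr (\<mu>+1)"
  define E where "E t = t * ((A t)^2 + (B t)^2) - (2*\<mu>+1) * A t * B t" for t
  define F where "F t = E t * exp (c / t)" for t
  have T1: "T \<ge> 1" "T \<ge> c" and c0: "c \<ge> 0" by (auto simp: T_def c_def)
  have dA: "(A has_real_derivative (\<mu>/t * A t - B t)) (at t)" if "t > 0" for t
    unfolding A_def B_def using jr_deriv[OF that] .
  have dB: "(B has_real_derivative (A t - (\<mu>+1)/t * B t)) (at t)" if "t > 0" for t
  proof -
    have "jr \<mu> t + jr (\<mu>+2) t = 2*(\<mu>+1)/t * jr (\<mu>+1) t"
      using jr_rec[OF that, of "\<mu>+1"] by (simp add: add.assoc)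
    then have eq: "(\<mu>+1)/t * jr (\<mu>+1) t - jr (\<mu>+1+1) t = A t - (\<mu>+1)/t * B t"
      unfolding A_def B_def by (simp add: field_simps add.assoc)
    have "(jr (\<mu>+1) has_real_derivative ((\<mu>+1)/t * jr (\<mu>+1) t - jr (\<mu>+1+1) t)) (at t)"
      by (rule jr_deriv[OF that])
    then show ?thesis unfolding B_def eq[unfolded B_def] .
  qed
  have dE: "(E has_real_derivative ((2*\<mu>+1) * A t * B t / t)) (at t)" if "t > 0" for t
    unfolding E_def[abs_def]
    apply (rule DERIV_cong)
     apply (rule derivative_eq_intros dA[OF that] dB[OF that] refl)+
    using that by (simp add: field_simps power2_eq_square)
  have Epos: "E t \<ge> t/2 * ((A t)^2 + (B t)^2)" if "t \<ge> T" for t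
  proof -
    have "\<bar>(2*\<mu>+1) * A t * B t\<bar> \<le> c * (((A t)^2 + (B t)^2)/2)"
    proof -
      have "\<bar>A t * B t\<bar> \<le> ((A t)^2 + (B t)^2)/2"
        using sum_squares_bound[of "\<bar>A t\<bar>" "\<bar>B t\<bar>"]
        by (simp add: abs_mult power2_eq_square)
      then show ?thesis unfolding c_def
        by (simp add: abs_mult mult.assoc mult_left_mono)
    qed
    moreover have "c * (((A t)^2 + (B t)^2)/2) \<le> t/2 * ((A t)^2 + (B t)^2)"
    proof -
      have "c * ((A t)^2+(B t)^2) \<le> t * ((A t)^2+(B t)^2)" using that T1 by (intro mult_right_mono) auto
      then show ?thesis by simp
    qed
    ultimately show ?thesis unfolding E_def by linarith
  qed
  have dF: "\<exists>y. (F has_real_derivative y) (at t) \<and> y \<le> 0" if "t \<ge> T" for t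
  proof -
    have t0: "t > 0" using that T1 by linarith
    then have tne: "t \<noteq> 0" by simp
    have "(F has_real_derivative ((2*\<mu>+1) * A t * B t / t * exp (c/t) + E t * (exp (c/t) * (- c / t^2)))) (at t)"
    proof -
      have dex: "((\<lambda>t. c / t) has_real_derivative (- c / t^2)) (at t)"
        using DERIV_cmult[OF DERIV_inverse[OF tne], of c] by (simp add: divide_inverse power2_eq_square)
      show ?thesis unfolding F_def[abs_def]
        by (rule DERIV_cong[OF DERIV_mult[OF dE[OF t0] DERIV_chain2[OF DERIV_exp dex]]]) (simp add: algebra_simps)
    qed
    moreover have "(2*\<mu>+1) * A t * B t / t * exp (c/t) + E t * (exp (c/t) * (- c / t^2)) \<le> 0"
    proof -
      define S where "S = (A t)^2 + (B t)^2"
      define P where "P = (2*\<mu>+1) * A t * B t"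
      have S0: "S \<ge> 0" by (simp add: S_def)
      have PS: "\<bar>P\<bar> \<le> c * (S/2)"
      proof -
        have "\<bar>A t * B t\<bar> \<le> S/2" unfolding S_def
          using sum_squares_bound[of "\<bar>A t\<bar>" "\<bar>B t\<bar>"] by (simp add: abs_mult power2_eq_square)
        then show ?thesis unfolding c_def P_def
          by (simp add: abs_mult mult.assoc mult_left_mono)
      qed
      have ES: "E t = t * S - P" by (simp add: E_def S_def P_def)
      have "P * t \<le> c * E t"
      proof -
        have "P * (t + c) \<le> \<bar>P\<bar> * (t + c)" using t0 c0 by (intro mult_right_mono) auto
        also have "\<dots> \<le> c * (S/2) * (t + c)" using PS t0 c0 by (intro mult_right_mono) auto
        also have "\<dots> \<le> c * (S/2) * (2*t)" using that T1 c0 S0 by (intro mult_left_mono) auto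
        finally show ?thesis unfolding ES by (simp add: algebra_simps)
      qed
      then have "P / t - c * E t / t^2 \<le> 0"
        using t0 by (simp add: field_simps power2_eq_square)
      then have "(P / t - c * E t / t^2) * exp (c/t) \<le> 0"
        by (simp add: mult_nonpos_nonneg)
      then show ?thesis unfolding P_def by (simp add: algebra_simps)
    qed
    ultimately show ?thesis by blast
  qed
  define C where "C = sqrt (2 * F T)"
  have "\<bar>jr \<mu> t\<bar> \<le> C" if "t \<ge> T" for t
  proof -
    have FT: "F t \<le> F T"
      by (rule DERIV_nonpos_imp_nonincreasing[OF that]) (use dF in auto)
    have t0: "t > 0" using that T1 by linarith
    have "t/2 * ((A t)^2 + (B t)^2) \<ge> 0" using t0 by simp
    then have E0: "E t \<ge> 0" using Epos[OF that] by linarith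
    have "E t \<le> F t" unfolding F_def
      using E0 t0 c0 by (simp add: mult_le_cancel_left1)
    moreover have "(A t)^2 \<le> 2 * E t"
    proof -
      have "1 * ((A t)^2 + (B t)^2) \<le> t * ((A t)^2 + (B t)^2)" using that T1
        by (intro mult_right_mono) auto
      moreover have "(B t)^2 \<ge> 0" by simp
      ultimately have "(A t)^2 \<le> t * ((A t)^2 + (B t)^2)" unfolding mult_1 by linarith
      then show ?thesis using Epos[OF that] by simp
    qed
    ultimately have "(A t)^2 \<le> 2 * F T" using FT by linarith
    then have "sqrt ((A t)^2) \<le> C" unfolding C_def by (rule real_sqrt_le_mono)
    then show ?thesis by (simp add: A_def)
  qed
  then show ?thesis using T1 by (intro exI[of _ C] exI[of _ T]) auto
qed



lemma smooth_cont: "smooth_on_interval g a b \<Longrightarrow> continuous_on {a..b} g"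
  unfolding smooth_on_interval_def by (metis DERIV_continuous_on)

lemma smooth_deriv:
  assumes "smooth_on_interval g a b"
  shows "\<exists>g'. (\<forall>x\<in>{a..b}. (g has_real_derivative g' x) (at x within {a..b})) \<and> smooth_on_interval g' a b"
proof -
  obtain D where D: "D 0 = g" "\<And>n x. x\<in>{a..b} \<Longrightarrow> (D n has_real_derivative D (Suc n) x) (at x within {a..b})"
    using assms unfolding smooth_on_interval_def by blast
  show ?thesis
    apply (rule exI[of _ "D 1"])
    using D unfolding smooth_on_interval_def
    by (auto intro!: exI[of _ "\<lambda>n. D (Suc n)"])
qed

lemma smooth_add:
  assumes "smooth_on_interval g a b" "smooth_on_interval h a b"
  shows "smooth_on_interval (\<lambda>x. g x + h x) a b"
proof -
  obtain D where D: "D 0 = g" "\<And>n x. x\<in>{a..b} \<Longrightarrow> (D n has_real_derivative D (Suc n) x) (at x within {a..b})"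
    using assms unfolding smooth_on_interval_def by blast
  obtain E where E: "E 0 = h" "\<And>n x. x\<in>{a..b} \<Longrightarrow> (E n has_real_derivative E (Suc n) x) (at x within {a..b})"
    using assms unfolding smooth_on_interval_def by blast
  show ?thesis unfolding smooth_on_interval_def
    by (rule exI[of _ "\<lambda>n x. D n x + E n x"]) (auto simp: D E intro!: derivative_eq_intros)
qed

lemma smooth_cmult:
  assumes "smooth_on_interval g a b"
  shows "smooth_on_interval (\<lambda>x. c * g x) a b"
proof -
  obtain D where D: "D 0 = g" "\<And>n x. x\<in>{a..b} \<Longrightarrow> (D n has_real_derivative D (Suc n) x) (at x within {a..b})"
    using assms unfolding smooth_on_interval_def by blast
  show ?thesis unfolding smooth_on_interval_def
    by (rule exI[of _ "\<lambda>n x. c * D n x"]) (auto simp: D intro!: derivative_eq_intros)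
qed

lemma leibniz_sum:
  fixes p q :: "nat \<Rightarrow> real"
  shows "(\<Sum>i=0..n. real (n choose i) * (p (Suc i) * q (n-i) + p i * q (Suc (n-i))))
       = (\<Sum>i=0..Suc n. real (Suc n choose i) * p i * q (Suc n - i))"
proof -
  define T where "T = (\<Sum>i=0..Suc n. real (n choose i) * p i * q (Suc n - i))"
  have T1: "T = (\<Sum>i=0..n. real (n choose i) * p i * q (Suc (n - i)))"
    unfolding T_def by (simp add: Suc_diff_le)
  have T2: "T = p 0 * q (Suc n) + (\<Sum>i=0..n. real (n choose Suc i) * p (Suc i) * q (n - i))"
    unfolding T_def by (subst sum.atLeast0_atMost_Suc_shift) simp
  have "(\<Sum>i=0..Suc n. real (Suc n choose i) * p i * q (Suc n - i))
      = p 0 * q (Suc n) + (\<Sum>i=0..n. real (Suc n choose Suc i) * p (Suc i) * q (n - i))"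
    by (subst sum.atLeast0_atMost_Suc_shift) simp
  also have "\<dots> = p 0 * q (Suc n) + (\<Sum>i=0..n. real (n choose i) * p (Suc i) * q (n - i))
      + (\<Sum>i=0..n. real (n choose Suc i) * p (Suc i) * q (n - i))"
    by (simp add: sum.distrib algebra_simps)
  also have "\<dots> = (\<Sum>i=0..n. real (n choose i) * p (Suc i) * q (n - i)) + T"
    using T2 by simp
  also have "\<dots> = (\<Sum>i=0..n. real (n choose i) * (p (Suc i) * q (n-i) + p i * q (Suc (n-i))))"
    unfolding T1 by (simp add: sum.distrib algebra_simps)
  finally show ?thesis by simp
qed

lemma smooth_mult:
  assumes "smooth_on_interval g a b" "smooth_on_interval h a b"
  shows "smooth_on_interval (\<lambda>x. g x * h x) a b"
proof -
  obtain D where D: "D 0 = g" "\<And>n x. x\<in>{a..b} \<Longrightarrow> (D n has_real_derivative D (Suc n) x) (at x within {a..b})"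
    using assms unfolding smooth_on_interval_def by blast
  obtain E where E: "E 0 = h" "\<And>n x. x\<in>{a..b} \<Longrightarrow> (E n has_real_derivative E (Suc n) x) (at x within {a..b})"
    using assms unfolding smooth_on_interval_def by blast
  define H where "H n x = (\<Sum>i=0..n. real (n choose i) * (D i x * E (n-i) x))" for n x
  have "(H n has_real_derivative H (Suc n) x) (at x within {a..b})" if x: "x \<in> {a..b}" for n x
  proof -
    have "(H n has_real_derivative
       (\<Sum>i=0..n. real (n choose i) * (D (Suc i) x * E (n-i) x + D i x * E (Suc (n-i)) x))) (at x within {a..b})"
      unfolding H_def[abs_def]
      apply (rule DERIV_sum)
      apply (rule DERIV_cong)
       apply (rule DERIV_cmult[OF DERIV_mult[OF D(2)[OF x] E(2)[OF x]]])
      apply (simp add: algebra_simps)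
      done
    then show ?thesis unfolding leibniz_sum[where p="\<lambda>i. D i x" and q="\<lambda>i. E i x"] H_def
      by (simp add: mult.assoc)
  qed
  moreover have "H 0 = (\<lambda>x. g x * h x)" by (simp add: H_def D E fun_eq_iff)
  ultimately show ?thesis unfolding smooth_on_interval_def by blast
qed

lemma smooth_inv:
  assumes "0 \<notin> {a..b}"
  shows "smooth_on_interval (\<lambda>x. 1 / x) a b"
proof -
  define D where "D n x = (-1)^n * fact n / x^(Suc n)" for n and x :: real
  have "(D n has_real_derivative D (Suc n) x) (at x within {a..b})" if x: "x \<in> {a..b}" for n x
  proof -
    have xne: "x \<noteq> 0" using assms x by auto
    show ?thesis unfolding D_def[abs_def]
      apply (rule DERIV_cong)
       apply (rule derivative_eq_intros refl | simp add: xne)+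
      done
  qed
  moreover have "D 0 = (\<lambda>x. 1 / x)" by (simp add: D_def fun_eq_iff)
  ultimately show ?thesis unfolding smooth_on_interval_def by blast
qed



definition ph :: "real \<Rightarrow> real \<Rightarrow> complex" where
  "ph \<sigma> \<mu> = (if \<sigma> > 0 then 1 else exp (\<i> * complex_of_real pi * complex_of_real \<mu>))"

lemma norm_ph [simp]: "norm (ph \<sigma> \<mu>) = 1"
  unfolding ph_def by (simp add: norm_exp_eq_Re)

lemma ph_nz [simp]: "ph \<sigma> \<mu> \<noteq> 0"
  using norm_ph[of \<sigma> \<mu>] by (metis norm_zero zero_neq_one)

lemma ph_shift:
  assumes "\<sigma> = 1 \<or> \<sigma> = -1"
  shows "complex_of_real \<sigma> * ph \<sigma> s = ph \<sigma> (s - 1)"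
  using assms
proof
  assume "\<sigma> = -1"
  have "exp (\<i> * complex_of_real pi * complex_of_real (s - 1))
      = exp (\<i> * complex_of_real pi * complex_of_real s) * exp (- (\<i> * complex_of_real pi))"
    by (simp add: algebra_simps exp_diff exp_minus field_simps)
  then show ?thesis using \<open>\<sigma> = -1\<close> by (simp add: ph_def exp_minus)
qed (simp add: ph_def)

lemma powr_ph:
  assumes "\<sigma> = 1 \<or> \<sigma> = -1" "\<sigma> * x > 0"
  shows "complex_of_real x powr complex_of_real s = ph \<sigma> s * complex_of_real ((\<sigma>*x) powr s)"
proof (cases "\<sigma> = 1")
  case False
  then have s: "\<sigma> = -1" using assms by simp
  then have "x < 0" using assms by simp
  then show ?thesis using s by (simp add: powr_of_neg_real ph_def mult.commute)
qed (use assms in \<open>simp add: ph_def powr_of_real\<close>)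

lemma bessel_series:
  "(\<Sum>m. (- ((complex_of_real u / 2) ^ 2)) ^ m / of_nat (fact m) * rGamma (of_nat m + complex_of_real \<mu> + 1))
    = complex_of_real (BP \<mu> (u^2/4))"
proof -
  have "complex_of_real (BP \<mu> (u^2/4)) = (\<Sum>m. complex_of_real (bc \<mu> m * (u^2/4)^m))"
    unfolding BP_def by (rule suminf_of_real[OF bc_summable])
  also have "\<dots> = (\<Sum>m. (- ((complex_of_real u / 2) ^ 2)) ^ m / of_nat (fact m) * rGamma (of_nat m + complex_of_real \<mu> + 1))"
  proof (rule suminf_cong)
    fix m
    have r: "rGamma (of_nat m + complex_of_real \<mu> + 1) = complex_of_real (rGamma (real m + \<mu> + 1))"
      by (simp flip: rGamma_complex_of_real)
    show "complex_of_real (bc \<mu> m * (u^2/4)^m) = (- ((complex_of_real u / 2) ^ 2)) ^ m / of_nat (fact m) * rGamma (of_nat m + complex_of_real \<mu> + 1)"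
      unfolding r bc_def by (simp add: power_minus' power_divide field_simps power_mult_distrib)
  qed
  finally show ?thesis by simp
qed

lemma bessel_ph:
  assumes "\<sigma> = 1 \<or> \<sigma> = -1" "\<sigma> * u > 0"
  shows "bessel_J \<mu> (complex_of_real u) = ph \<sigma> \<mu> * complex_of_real (jr \<mu> (\<sigma>*u))"
proof -
  have u2: "(\<sigma>*u)^2 = u^2" using assms(1) by (auto simp: power_mult_distrib)
  have "(complex_of_real u / 2) powr complex_of_real \<mu> = complex_of_real (u/2) powr complex_of_real \<mu>"
    by simp
  also have "\<dots> = ph \<sigma> \<mu> * complex_of_real ((\<sigma>*(u/2)) powr \<mu>)"
    by (rule powr_ph) (use assms in auto)
  finally show ?thesis unfolding bessel_J_def bessel_series jr_def u2
    by (simp add: mult_ac)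
qed

lemma G_deriv:
  assumes "\<omega> > 0" "u > 0"
  shows "((\<lambda>u. u powr s * jr s (\<omega>*u)) has_real_derivative \<omega> * (u powr s * jr (s-1) (\<omega>*u))) (at u)"
proof -
  have t: "\<omega>*u > 0" using assms by simp
  have dj: "((\<lambda>u. jr s (\<omega>*u)) has_real_derivative (s/(\<omega>*u) * jr s (\<omega>*u) - jr (s+1) (\<omega>*u)) * \<omega>) (at u)"
    by (rule DERIV_chain2[where g="\<lambda>u. \<omega>*u" and x=u, OF jr_deriv[OF t, of s]]) (auto intro!: derivative_eq_intros)
  have dp: "((\<lambda>u. u powr s) has_real_derivative s * u powr (s-1)) (at u)"
    by (rule has_real_derivative_powr[OF assms(2)])
  have rec: "jr (s-1) (\<omega>*u) = 2 * s / (\<omega>*u) * jr s (\<omega>*u) - jr (s+1) (\<omega>*u)"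
    using jr_rec[OF t, of s] by simp
  have p1: "u powr (s-1) = u powr s / u" using assms by (simp add: powr_diff)
  show ?thesis
    apply (rule DERIV_cong[OF DERIV_mult[OF dp dj]])
    unfolding rec p1 using assms by (simp add: field_simps)
qed

lemma F_deriv:
  assumes "\<sigma> = 1 \<or> \<sigma> = -1" "\<sigma> * x > 0" "\<omega> > 0"
  shows "((\<lambda>x. complex_of_real x powr complex_of_real s * bessel_J s (complex_of_real (\<omega>*x))) has_vector_derivative
          (complex_of_real \<omega> * (complex_of_real x powr complex_of_real s * bessel_J (s-1) (complex_of_real (\<omega>*x))))) (at x)"
proof -
  define S where "S = {y. \<sigma> * y > 0}"
  have oS: "open S" unfolding S_def
    using assms(1) by (auto intro!: open_Collect_less continuous_intros)
  have xS: "x \<in> S" using assms by (simp add: S_def)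
  have eq: "complex_of_real y powr complex_of_real s * bessel_J s (complex_of_real (\<omega>*y))
      = ph \<sigma> s * ph \<sigma> s * complex_of_real ((\<sigma>*y) powr s * jr s (\<omega>*(\<sigma>*y)))" if "y \<in> S" for y
  proof -
    have y: "\<sigma> * y > 0" using that by (simp add: S_def)
    have "\<sigma> * (\<omega> * y) > 0" using y assms(3) by (simp add: mult.left_commute)
    then show ?thesis
      using powr_ph[OF assms(1) y, of s] bessel_ph[OF assms(1), of "\<omega>*y" s]
      by (simp add: mult_ac)
  qed
  have su: "\<sigma>*x > 0" by fact
  have dG: "((\<lambda>y. (\<sigma>*y) powr s * jr s (\<omega>*(\<sigma>*y))) has_real_derivative
      (\<omega> * ((\<sigma>*x) powr s * jr (s-1) (\<omega>*(\<sigma>*x)))) * \<sigma>) (at x)"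
    by (rule DERIV_chain2[where g="\<lambda>y. \<sigma>*y" and x=x, OF G_deriv[OF assms(3) su, of s]])
       (auto intro!: derivative_eq_intros)
  have D1: "((\<lambda>y. ph \<sigma> s * ph \<sigma> s * complex_of_real ((\<sigma>*y) powr s * jr s (\<omega>*(\<sigma>*y)))) has_vector_derivative
      ph \<sigma> s * ph \<sigma> s * complex_of_real ((\<omega> * ((\<sigma>*x) powr s * jr (s-1) (\<omega>*(\<sigma>*x)))) * \<sigma>)) (at x)"
    by (intro has_vector_derivative_mult_right has_vector_derivative_of_real dG)
  have E1: "ph \<sigma> s * ph \<sigma> s * complex_of_real ((\<omega> * ((\<sigma>*x) powr s * jr (s-1) (\<omega>*(\<sigma>*x)))) * \<sigma>)
      = complex_of_real \<omega> * (complex_of_real x powr complex_of_real s * bessel_J (s-1) (complex_of_real (\<omega>*x)))"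
  proof -
    have "\<sigma> * (\<omega> * x) > 0" using su assms(3) by (simp add: mult.left_commute)
    then have b: "bessel_J (s-1) (complex_of_real (\<omega>*x)) = ph \<sigma> (s-1) * complex_of_real (jr (s-1) (\<omega>*(\<sigma>*x)))"
      using bessel_ph[OF assms(1), of "\<omega>*x" "s-1"] by (simp add: mult_ac)
    show ?thesis unfolding b powr_ph[OF assms(1) su] ph_shift[OF assms(1), symmetric]
      by (simp add: mult_ac)
  qed
  have "((\<lambda>y. ph \<sigma> s * ph \<sigma> s * complex_of_real ((\<sigma>*y) powr s * jr s (\<omega>*(\<sigma>*y)))) has_vector_derivative
      complex_of_real \<omega> * (complex_of_real x powr complex_of_real s * bessel_J (s-1) (complex_of_real (\<omega>*x)))) (at x)"
    using D1 unfolding E1 .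
  then show ?thesis
    by (rule has_vector_derivative_transform_within_open[OF _ oS xS]) (metis eq)
qed



definition okab :: "real \<Rightarrow> real \<Rightarrow> real \<Rightarrow> bool" where
  "okab \<sigma> a b \<longleftrightarrow> (\<sigma> = 1 \<or> \<sigma> = -1) \<and> a < b \<and> \<sigma> * a > 0 \<and> \<sigma> * b > 0"

lemma okab_pos: "okab \<sigma> a b \<Longrightarrow> x \<in> {a..b} \<Longrightarrow> \<sigma> * x > 0"
  unfolding okab_def by auto

lemma okab_sig: "okab \<sigma> a b \<Longrightarrow> \<sigma> = 1 \<or> \<sigma> = -1"
  unfolding okab_def by auto

lemma okab_nz: "okab \<sigma> a b \<Longrightarrow> x \<in> {a..b} \<Longrightarrow> x \<noteq> 0"
  using okab_pos by fastforce

lemma vd_within: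
  assumes "okab \<sigma> a b" "x \<in> {a..b}" "(h has_vector_derivative h') (at x within {a..b})"
  shows "vector_derivative h (at x within {a..b}) = h'"
  using vector_derivative_within_cbox[of a b x h h'] assms unfolding okab_def by simp

lemma h_deriv:
  assumes ok: "okab \<sigma> a b"
    and g: "\<And>y. y \<in> {a..b} \<Longrightarrow> (g has_real_derivative g' y) (at y within {a..b})"
    and phi: "\<And>y. y \<in> {a..b} \<Longrightarrow> \<phi> y = complex_of_real (g y)"
    and x: "x \<in> {a..b}"
  shows "((\<lambda>y. \<phi> y / complex_of_real y powr complex_of_real s) has_vector_derivative
     (complex_of_real ((g' x - s / x * g x) * (\<sigma>*x) powr (-s)) / ph \<sigma> s)) (at x within {a..b})"
proof -
  have sx: "\<sigma> * x > 0" using okab_pos[OF ok x] .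
  have sg: "\<sigma> = 1 \<or> \<sigma> = -1" using okab_sig[OF ok] .
  have dl: "((\<lambda>y. \<sigma>*y) has_real_derivative \<sigma>) (at x)" by (auto intro!: derivative_eq_intros)
  have dp: "((\<lambda>y. (\<sigma>*y) powr (-s)) has_real_derivative (-s) * (\<sigma>*x) powr (-s - 1) * \<sigma>) (at x within {a..b})"
    using DERIV_fun_powr[OF dl sx, of "-s"] by (simp add: has_field_derivative_at_within)
  have dq: "((\<lambda>y. g y * (\<sigma>*y) powr (-s)) has_real_derivative
       g x * ((-s) * (\<sigma>*x) powr (-s - 1) * \<sigma>) + g' x * (\<sigma>*x) powr (-s)) (at x within {a..b})"
    by (rule DERIV_cong[OF DERIV_mult[OF g[OF x] dp]]) (simp add: algebra_simps)
  have e: "g x * ((-s) * (\<sigma>*x) powr (-s - 1) * \<sigma>) + g' x * (\<sigma>*x) powr (-s)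
         = (g' x - s / x * g x) * (\<sigma>*x) powr (-s)"
  proof -
    have "(\<sigma>*x) powr (-s - 1) = (\<sigma>*x) powr (-s) / (\<sigma>*x)" using sx by (simp add: powr_diff)
    moreover have "\<sigma> * \<sigma> = 1" using sg by auto
    ultimately show ?thesis using sx by (simp add: field_simps)
  qed
  have d2: "((\<lambda>y. complex_of_real (g y * (\<sigma>*y) powr (-s)) * inverse (ph \<sigma> s)) has_vector_derivative
     complex_of_real ((g' x - s / x * g x) * (\<sigma>*x) powr (-s)) * inverse (ph \<sigma> s)) (at x within {a..b})"
    by (intro has_vector_derivative_mult_left has_vector_derivative_of_real) (use dq e in simp)
  show ?thesis
  proof (rule has_vector_derivative_transform[OF x _ d2[unfolded divide_inverse[symmetric]]])
    fix y assume y: "y \<in> {a..b}"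
    have sy: "\<sigma> * y > 0" using okab_pos[OF ok y] .
    show "\<phi> y / complex_of_real y powr complex_of_real s = complex_of_real (g y * (\<sigma> * y) powr - s) / ph \<sigma> s"
      unfolding phi[OF y] powr_ph[OF sg sy] using sy by (simp add: powr_minus field_simps)
  qed
qed

lemma sigma_real:
  assumes ok: "okab \<sigma> a b" and f: "smooth_on_interval f a b"
  shows "\<exists>g. smooth_on_interval g a b \<and> (\<forall>x\<in>{a..b}. sigma \<nu> f a b k x = complex_of_real (g x))"
proof (induction k)
  case 0
  then show ?case using f by auto
next
  case (Suc k)
  then obtain g where g: "smooth_on_interval g a b" "\<And>x. x\<in>{a..b} \<Longrightarrow> sigma \<nu> f a b k x = complex_of_real (g x)"
    by blast
  obtain g' where g': "\<And>x. x\<in>{a..b} \<Longrightarrow> (g has_real_derivative g' x) (at x within {a..b})"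
    "smooth_on_interval g' a b"
    using smooth_deriv[OF g(1)] by blast
  define s where "s = \<nu> + real (Suc k)"
  have sg: "\<sigma> = 1 \<or> \<sigma> = -1" using okab_sig[OF ok] .
  have "sigma \<nu> f a b (Suc k) x = complex_of_real (g' x - s / x * g x)" if x: "x \<in> {a..b}" for x
  proof -
    have sx: "\<sigma> * x > 0" using okab_pos[OF ok x] .
    have vd: "vector_derivative (\<lambda>y. sigma \<nu> f a b k y / complex_of_real y powr complex_of_real s) (at x within {a..b})
       = complex_of_real ((g' x - s / x * g x) * (\<sigma>*x) powr (-s)) / ph \<sigma> s"
      by (rule vd_within[OF ok x h_deriv[OF ok g'(1) g(2) x]])
    have "(\<sigma>*x) powr s \<noteq> 0" using sx by (auto simp: powr_eq_0_iff)
    then have "(\<sigma>*x) powr s * (\<sigma>*x) powr (-s) = 1" by (simp add: powr_minus)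
    then show ?thesis
      unfolding sigma.simps s_def[symmetric] vd powr_ph[OF sg sx]
      by (simp add: field_simps flip: of_real_mult)
  qed
  moreover have "smooth_on_interval (\<lambda>x. g' x - s / x * g x) a b"
  proof -
    have "0 \<notin> {a..b}" using okab_nz[OF ok] by blast
    then have "smooth_on_interval (\<lambda>x. g' x + (-s) * (1 / x * g x)) a b"
      by (intro smooth_add smooth_cmult smooth_mult smooth_inv g'(2) g(1))
    then show ?thesis by (simp add: field_simps)
  qed
  ultimately show ?case by blast
qed

lemma sigma_vd:
  assumes ok: "okab \<sigma> a b" and f: "smooth_on_interval f a b" and x: "x \<in> {a..b}"
  shows "((\<lambda>y. sigma \<nu> f a b k y / complex_of_real y powr complex_of_real s) has_vector_derivative
     vector_derivative (\<lambda>y. sigma \<nu> f a b k y / complex_of_real y powr complex_of_real s) (at x within {a..b}))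
     (at x within {a..b})"
proof -
  obtain g where g: "smooth_on_interval g a b" "\<And>x. x\<in>{a..b} \<Longrightarrow> sigma \<nu> f a b k x = complex_of_real (g x)"
    using sigma_real[OF ok f] by blast
  obtain g' where g': "\<And>x. x\<in>{a..b} \<Longrightarrow> (g has_real_derivative g' x) (at x within {a..b})"
    using smooth_deriv[OF g(1)] by blast
  have d: "((\<lambda>y. sigma \<nu> f a b k y / complex_of_real y powr complex_of_real s) has_vector_derivative
     (complex_of_real ((g' x - s / x * g x) * (\<sigma>*x) powr (-s)) / ph \<sigma> s)) (at x within {a..b})"
    by (rule h_deriv[OF ok g' g(2) x])
  show ?thesis using d vd_within[OF ok x d] by simp
qed



definition II :: "real \<Rightarrow> (real \<Rightarrow> real) \<Rightarrow> real \<Rightarrow> real \<Rightarrow> nat \<Rightarrow> real \<Rightarrow> complex" where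
  "II \<nu> f a b k \<omega> = integral {a..b} (\<lambda>x. sigma \<nu> f a b k x * bessel_J (\<nu> + real k) (complex_of_real (\<omega>*x)))"

definition BB :: "real \<Rightarrow> (real \<Rightarrow> real) \<Rightarrow> real \<Rightarrow> real \<Rightarrow> nat \<Rightarrow> real \<Rightarrow> complex" where
  "BB \<nu> f a b k \<omega> = sigma \<nu> f a b k b * bessel_J (\<nu> + real (Suc k)) (complex_of_real (\<omega>*b))
     - sigma \<nu> f a b k a * bessel_J (\<nu> + real (Suc k)) (complex_of_real (\<omega>*a))"

lemma cont_sigma:
  assumes ok: "okab \<sigma> a b" and f: "smooth_on_interval f a b"
  shows "continuous_on {a..b} (sigma \<nu> f a b k)"
proof -
  obtain g where g: "smooth_on_interval g a b" "\<And>x. x\<in>{a..b} \<Longrightarrow> sigma \<nu> f a b k x = complex_of_real (g x)"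
    using sigma_real[OF ok f] by blast
  have "continuous_on {a..b} (\<lambda>x. complex_of_real (g x))"
    using smooth_cont[OF g(1)] by (intro continuous_intros)
  then show ?thesis by (rule continuous_on_eq) (use g(2) in auto)
qed

lemma cont_bes:
  assumes ok: "okab \<sigma> a b" and w: "\<omega> > 0"
  shows "continuous_on {a..b} (\<lambda>x. bessel_J \<mu> (complex_of_real (\<omega>*x)))"
proof -
  have sg: "\<sigma> = 1 \<or> \<sigma> = -1" using okab_sig[OF ok] .
  have pos: "\<sigma> * (\<omega>*x) > 0" if "x \<in> {a..b}" for x
    using okab_pos[OF ok that] w by (simp add: mult.left_commute)
  have "isCont (\<lambda>x. jr \<mu> (\<sigma>*(\<omega>*x))) x" if "x \<in> {a..b}" for x
    by (rule isCont_o2[where g="jr \<mu>"]) (auto intro!: continuous_intros DERIV_isCont[OF jr_deriv[OF pos[OF that]]])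
  then have "continuous_on {a..b} (\<lambda>x. jr \<mu> (\<sigma>*(\<omega>*x)))"
    by (intro continuous_at_imp_continuous_on) auto
  then have "continuous_on {a..b} (\<lambda>x. ph \<sigma> \<mu> * complex_of_real (jr \<mu> (\<sigma>*(\<omega>*x))))"
    by (intro continuous_intros)
  then show ?thesis by (rule continuous_on_eq) (use bessel_ph[OF sg pos] in auto)
qed

lemma ibp_step:
  assumes ok: "okab \<sigma> a b" and f: "smooth_on_interval f a b" and w: "\<omega> > 0"
  shows "II \<nu> f a b k \<omega> = (BB \<nu> f a b k \<omega> - II \<nu> f a b (Suc k) \<omega>) / complex_of_real \<omega>"
proof -
  define s where "s = \<nu> + real (Suc k)"
  define h where "h = (\<lambda>y. sigma \<nu> f a b k y / complex_of_real y powr complex_of_real s)"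
  define h' where "h' = (\<lambda>x. vector_derivative h (at x within {a..b}))"
  define F where "F = (\<lambda>x. complex_of_real x powr complex_of_real s * bessel_J s (complex_of_real (\<omega>*x)))"
  define F' where "F' = (\<lambda>x. complex_of_real \<omega> * (complex_of_real x powr complex_of_real s * bessel_J (s-1) (complex_of_real (\<omega>*x))))"
  have sg: "\<sigma> = 1 \<or> \<sigma> = -1" using okab_sig[OF ok] .
  have ab: "a \<le> b" using ok by (simp add: okab_def)
  have hd: "(h has_vector_derivative h' x) (at x within {a..b})" if "x \<in> {a..b}" for x
    unfolding h_def h'_def by (rule sigma_vd[OF ok f that])
  have hd': "(h has_vector_derivative h' x) (at x)" if "x \<in> {a<..<b}" for x
  proof -
    from that have "at x within {a..b} = at x" by (simp add: at_within_Icc_at)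
    with hd[of x] that show ?thesis by auto
  qed
  have Fd: "(F has_vector_derivative F' x) (at x)" if "x \<in> {a..b}" for x
    unfolding F_def F'_def by (rule F_deriv[OF sg okab_pos[OF ok that] w])
  have ch: "continuous_on {a..b} h"
    unfolding continuous_on_eq_continuous_within using hd has_vector_derivative_continuous by blast
  have cF: "continuous_on {a..b} F"
    by (intro continuous_at_imp_continuous_on ballI) (rule has_vector_derivative_continuous[OF Fd])
  have s1: "s - 1 = \<nu> + real k" by (simp add: s_def)
  have hF': "h x * F' x = complex_of_real \<omega> * (sigma \<nu> f a b k x * bessel_J (\<nu> + real k) (complex_of_real (\<omega>*x)))"
    if "x \<in> {a..b}" for x
  proof -
    have "complex_of_real x powr complex_of_real s \<noteq> 0" using okab_nz[OF ok that] by simp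
    then show ?thesis unfolding h_def F'_def s1 by (simp add: field_simps)
  qed
  have h'F: "h' x * F x = sigma \<nu> f a b (Suc k) x * bessel_J (\<nu> + real (Suc k)) (complex_of_real (\<omega>*x))"
    for x
    unfolding h'_def F_def h_def s_def by (simp add: mult_ac)
  have int1: "(\<lambda>x. sigma \<nu> f a b k x * bessel_J (\<nu> + real k) (complex_of_real (\<omega>*x))) integrable_on {a..b}"
    by (intro integrable_continuous_interval continuous_intros cont_sigma[OF ok f] cont_bes[OF ok w])
  define Y where "Y = h b * F b - h a * F a - complex_of_real \<omega> * II \<nu> f a b k \<omega>"
  have "((\<lambda>x. h x * F' x) has_integral (h b * F b - h a * F a - Y)) {a..b}"
  proof -
    have "((\<lambda>x. complex_of_real \<omega> * (sigma \<nu> f a b k x * bessel_J (\<nu> + real k) (complex_of_real (\<omega>*x))))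
        has_integral (complex_of_real \<omega> * II \<nu> f a b k \<omega>)) {a..b}"
      unfolding II_def by (intro has_integral_mult_right integrable_integral int1)
    moreover have "h b * F b - h a * F a - Y = complex_of_real \<omega> * II \<nu> f a b k \<omega>"
      by (simp add: Y_def)
    ultimately show ?thesis by (metis (no_types, lifting) has_integral_eq hF')
  qed
  then have "((\<lambda>x. h' x * F x) has_integral Y) {a..b}"
    by (intro integration_by_parts_interior[OF bounded_bilinear_mult ab ch cF, of h' F'])
       (use hd' Fd in auto)
  then have "II \<nu> f a b (Suc k) \<omega> = Y"
    unfolding II_def h'F by (rule integral_unique)
  moreover have "h b * F b - h a * F a = BB \<nu> f a b k \<omega>"
  proof -
    have "complex_of_real b powr complex_of_real s \<noteq> 0" "complex_of_real a powr complex_of_real s \<noteq> 0"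
      using okab_nz[OF ok, of a] okab_nz[OF ok, of b] ab by auto
    then show ?thesis unfolding h_def F_def BB_def s_def by simp
  qed
  ultimately show ?thesis unfolding Y_def using w by (simp add: field_simps)
qed



lemma remainder:
  assumes ok: "okab \<sigma> a b" and f: "smooth_on_interval f a b" and w: "\<omega> > 0"
  shows "hankel_type_integral \<nu> f a b \<omega>
       - (- (\<Sum>k=1..N. (1 / (- complex_of_real \<omega>) ^ k) *
              (sigma \<nu> f a b (k - 1) b * bessel_J (\<nu> + real k) (complex_of_real (\<omega> * b))
               - sigma \<nu> f a b (k - 1) a * bessel_J (\<nu> + real k) (complex_of_real (\<omega> * a)))))
     = (1 / (- complex_of_real \<omega>) ^ N) * II \<nu> f a b N \<omega>"
proof (induction N)
  case 0
  show ?case by (simp add: hankel_type_integral_def II_def)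
next
  case (Suc N)
  have step: "II \<nu> f a b N \<omega> = (BB \<nu> f a b N \<omega> - II \<nu> f a b (Suc N) \<omega>) / complex_of_real \<omega>"
    by (rule ibp_step[OF ok f w])
  have wn: "complex_of_real \<omega> \<noteq> 0" using w by simp
  have tm: "(1 / (- complex_of_real \<omega>) ^ Suc N) *
              (sigma \<nu> f a b (Suc N - 1) b * bessel_J (\<nu> + real (Suc N)) (complex_of_real (\<omega> * b))
               - sigma \<nu> f a b (Suc N - 1) a * bessel_J (\<nu> + real (Suc N)) (complex_of_real (\<omega> * a)))
      = (1 / (- complex_of_real \<omega>) ^ Suc N) * BB \<nu> f a b N \<omega>"
    by (simp add: BB_def)
  show ?case
    unfolding sum.cl_ivl_Suc using Suc.IH unfolding tm step
    by (simp add: field_simps wn) (simp add: add_divide_distrib[symmetric])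
qed

lemma min_pos:
  assumes ok: "okab \<sigma> a b" and x: "x \<in> {a..b}"
  shows "\<sigma> * x \<ge> min (\<sigma>*a) (\<sigma>*b)"
  using ok x unfolding okab_def by auto



theorem corollary2p2:
  fixes \<nu> a b :: real and f :: "real \<Rightarrow> real"
  assumes "(0 < a \<and> a < b) \<or> (a < b \<and> b < 0)"
    and "smooth_on_interval f a b"
  shows "\<forall>N::nat.
    (\<lambda>\<omega>. hankel_type_integral \<nu> f a b \<omega>
       - (- (\<Sum>k=1..N. (1 / (- complex_of_real \<omega>) ^ k) *
              (sigma \<nu> f a b (k - 1) b * bessel_J (\<nu> + real k) (complex_of_real (\<omega> * b))
               - sigma \<nu> f a b (k - 1) a * bessel_J (\<nu> + real k) (complex_of_real (\<omega> * a))))))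
    \<in> O[at_top](\<lambda>\<omega>. complex_of_real (\<omega> powr (- (real N + 1))))"
proof
  fix N :: nat
  obtain \<sigma> where ok: "okab \<sigma> a b"
  proof (cases "0 < a")
    case True
    then show ?thesis using assms(1) that[of 1] by (auto simp: okab_def)
  next
    case False
    then show ?thesis using assms(1) that[of "-1"] by (auto simp: okab_def)
  qed
  have f: "smooth_on_interval f a b" by fact
  have ab: "a \<le> b" using ok by (simp add: okab_def)
  have sg: "\<sigma> = 1 \<or> \<sigma> = -1" using okab_sig[OF ok] .
  define m where "m = min (\<sigma>*a) (\<sigma>*b)"
  have m0: "m > 0" using ok by (simp add: okab_def m_def)
  define \<mu> where "\<mu> = \<nu> + real (Suc N)"
  obtain C T where CT: "T > 0" "\<And>t. t \<ge> T \<Longrightarrow> \<bar>jr \<mu> t\<bar> \<le> C"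
    using jr_bounded[of \<mu>] by blast
  have C0: "C \<ge> 0" using CT(2)[of T] by simp
  obtain M1 where M1: "M1 \<ge> 0" "\<And>x. x \<in> {a..b} \<Longrightarrow> norm (sigma \<nu> f a b N x) \<le> M1"
    using continuous_on_compact_bound[OF compact_Icc cont_sigma[OF ok f]] by blast
  obtain M2 where M2: "M2 \<ge> 0" "\<And>x. x \<in> {a..b} \<Longrightarrow> norm (sigma \<nu> f a b (Suc N) x) \<le> M2"
    using continuous_on_compact_bound[OF compact_Icc cont_sigma[OF ok f]] by blast
  define K where "K = 2 * (M1 * C) + M2 * C * (b - a)"
  have jb: "norm (bessel_J \<mu> (complex_of_real (\<omega>*x))) \<le> C"
    if w: "\<omega> \<ge> T / m" "\<omega> > 0" and x: "x \<in> {a..b}" for \<omega> x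
  proof -
    have sx: "\<sigma> * x \<ge> m" using min_pos[OF ok x] by (simp add: m_def)
    have pos: "\<sigma> * (\<omega>*x) > 0" using okab_pos[OF ok x] w by (simp add: mult.left_commute)
    have "T = (T / m) * m" using m0 by simp
    also have "\<dots> \<le> \<omega> * (\<sigma> * x)" using w sx m0 CT(1)
      by (intro mult_mono) auto
    finally have "\<sigma> * (\<omega>*x) \<ge> T" by (simp add: mult_ac)
    then show ?thesis using bessel_ph[OF sg pos, of \<mu>] CT(2) by (simp add: norm_mult)
  qed
  have bound: "norm (hankel_type_integral \<nu> f a b \<omega>
       - (- (\<Sum>k=1..N. (1 / (- complex_of_real \<omega>) ^ k) *
              (sigma \<nu> f a b (k - 1) b * bessel_J (\<nu> + real k) (complex_of_real (\<omega> * b))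
               - sigma \<nu> f a b (k - 1) a * bessel_J (\<nu> + real k) (complex_of_real (\<omega> * a))))))
     \<le> K * norm (complex_of_real (\<omega> powr (- (real N + 1))))"
    if w: "\<omega> \<ge> max 1 (T / m)" for \<omega>
  proof -
    have w0: "\<omega> > 0" "\<omega> \<ge> T / m" using w by auto
    have bB: "norm (BB \<nu> f a b N \<omega>) \<le> 2 * (M1 * C)"
    proof -
      have "norm (sigma \<nu> f a b N x * bessel_J \<mu> (complex_of_real (\<omega>*x))) \<le> M1 * C"
        if "x \<in> {a..b}" for x
        unfolding norm_mult by (intro mult_mono M1(2) jb w0 that) (use M1 in auto)
      from this[of b] this[of a] ab have "norm (BB \<nu> f a b N \<omega>) \<le> M1 * C + M1 * C"
        unfolding BB_def \<mu>_def by (intro order.trans[OF norm_triangle_ineq4] add_mono) auto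
      then show ?thesis by (simp add: mult.commute)
    qed
    have bI: "norm (II \<nu> f a b (Suc N) \<omega>) \<le> M2 * C * (b - a)"
    proof -
      have int: "(\<lambda>x. sigma \<nu> f a b (Suc N) x * bessel_J \<mu> (complex_of_real (\<omega>*x))) integrable_on {a..b}"
        by (intro integrable_continuous_interval continuous_intros cont_sigma[OF ok f] cont_bes[OF ok w0(1)])
      have "norm (II \<nu> f a b (Suc N) \<omega>) \<le> (M2 * C) * Henstock_Kurzweil_Integration.content (cbox a b)"
      proof (rule has_integral_bound)
        show "((\<lambda>x. sigma \<nu> f a b (Suc N) x * bessel_J \<mu> (complex_of_real (\<omega>*x))) has_integral II \<nu> f a b (Suc N) \<omega>) (cbox a b)"
          using int unfolding II_def \<mu>_def by (simp add: has_integral_integral)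
        fix x assume "x \<in> cbox a b"
        then have x: "x \<in> {a..b}" by simp
        show "norm (sigma \<nu> f a b (Suc N) x * bessel_J \<mu> (complex_of_real (\<omega>*x))) \<le> M2 * C"
          unfolding norm_mult by (intro mult_mono M2(2) jb w0 x) (use M2 in auto)
      qed (use M2 C0 in auto)
      then show ?thesis using ab by simp
    qed
    have R: "hankel_type_integral \<nu> f a b \<omega>
       - (- (\<Sum>k=1..N. (1 / (- complex_of_real \<omega>) ^ k) *
              (sigma \<nu> f a b (k - 1) b * bessel_J (\<nu> + real k) (complex_of_real (\<omega> * b))
               - sigma \<nu> f a b (k - 1) a * bessel_J (\<nu> + real k) (complex_of_real (\<omega> * a)))))
      = (1 / (- complex_of_real \<omega>) ^ N) * ((BB \<nu> f a b N \<omega> - II \<nu> f a b (Suc N) \<omega>) / complex_of_real \<omega>)"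
      unfolding remainder[OF ok f w0(1)] ibp_step[OF ok f w0(1), where k=N] ..
    have pw: "norm (complex_of_real (\<omega> powr (- (real N + 1)))) = 1 / \<omega>^(Suc N)"
    proof -
      have e: "- (real N + 1) = - real (Suc N)" by simp
      have "\<omega> powr (- (real N + 1)) = inverse (\<omega> powr real (Suc N))"
        unfolding e by (rule powr_minus)
      then have "\<omega> powr (- (real N + 1)) = 1 / \<omega> powr (real (Suc N))"
        by (simp only: inverse_eq_divide)
      also have "\<dots> = 1 / \<omega>^(Suc N)" by (simp only: powr_realpow[OF w0(1)])
      finally show ?thesis using w0 by (simp add: norm_divide norm_mult norm_power)
    qed
    have "norm (BB \<nu> f a b N \<omega> - II \<nu> f a b (Suc N) \<omega>) \<le> K"
      unfolding K_def using norm_triangle_ineq4[of "BB \<nu> f a b N \<omega>" "II \<nu> f a b (Suc N) \<omega>"] bB bI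
      by linarith
    then have "norm (BB \<nu> f a b N \<omega> - II \<nu> f a b (Suc N) \<omega>) / \<omega>^(Suc N) \<le> K / \<omega>^(Suc N)"
      using w0 by (simp add: divide_right_mono)
    moreover have "norm ((1 / (- complex_of_real \<omega>) ^ N) * ((BB \<nu> f a b N \<omega> - II \<nu> f a b (Suc N) \<omega>) / complex_of_real \<omega>))
       = norm (BB \<nu> f a b N \<omega> - II \<nu> f a b (Suc N) \<omega>) / \<omega>^(Suc N)"
      using w0 by (simp add: norm_mult norm_divide norm_power)
    ultimately show ?thesis unfolding R pw by simp
  qed
  show "(\<lambda>\<omega>. hankel_type_integral \<nu> f a b \<omega>
       - (- (\<Sum>k=1..N. (1 / (- complex_of_real \<omega>) ^ k) *
              (sigma \<nu> f a b (k - 1) b * bessel_J (\<nu> + real k) (complex_of_real (\<omega> * b))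
               - sigma \<nu> f a b (k - 1) a * bessel_J (\<nu> + real k) (complex_of_real (\<omega> * a))))))
    \<in> O[at_top](\<lambda>\<omega>. complex_of_real (\<omega> powr (- (real N + 1))))"
    by (rule bigoI[where c=K]) (use bound in \<open>auto intro!: eventually_at_top_linorderI[of "max 1 (T/m)"]\<close>)
qed

end
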